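(* (Working in $\mathbf{ZF}$.) Let $X$ be a generalized topological space and let $(\alpha X,\alpha)$ be a compactification of $X_{top}$ (identify $X$ with $\alpha(X)$). Then $\mathrm{Cov}^w_{\alpha X}$ is a generalized topology in $\alpha X$ if and only if the operator $\mathrm{Ex}_{\alpha X}$ is admissibly additive, i.e. $\mathrm{Ex}_{\alpha X}(\bigcup_{U\in\mathcal U}U)=\bigcup_{U\in\mathcal U}\mathrm{Ex}_{\alpha X}(U)$ for every $\mathcal U\in\mathrm{Cov}_X$.
   Context: A generalized topological space (gts) $(X,\mathrm{Op}_X,\mathrm{Cov}_X)$ is in the sense of Delfs–Knebusch: $\mathrm{Op}_X\subseteq\mathcal P(X)$ and $\mathrm{Cov}_X\subseteq\mathcal P(\mathrm{Op}_X)$ satisfy (A1) $\emptyset,X\in\mathrm{Op}_X$; (A2) $\mathrm{Op}_X$ closed under finite unions and intersections; (A3) finite subfamilies of $\mathrm{Op}_X$ lie in $\mathrm{Cov}_X$; (A4) $\bigcup\mathcal U\in\mathrm{Op}_X$ for $\mathcal U\in\mathrm{Cov}_X$; (A5) for $\mathcal U\in\mathrm{Cov}_X$ and $V\in\mathrm{Op}_X$, $V\subseteq\bigcup\mathcal U$: $\{V\cap U:U\in\mathcal U\}\in\mathrm{Cov}_X$; (A6) if $\mathcal U\in\mathrm{Cov}_X$ and $\mathcal V_U\in\mathrm{Cov}_X$ with $\bigcup\mathcal V_U=U$ then $\bigcup_U\mathcal V_U\in\mathrm{Cov}_X$; (A7) if $\mathcal U\in\mathrm{Cov}_X$, $\mathcal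 V\subseteq\mathrm{Op}_X$, $\bigcup\mathcal V=\bigcup\mathcal U$, every member of $\mathcal U$ in some member of $\mathcal V$, then $\mathcal V\in\mathrm{Cov}_X$; (A8) if $\mathcal U\in\mathrm{Cov}_X$, $V\subseteq\bigcup\mathcal U$, $V\cap U\in\mathrm{Op}_X$ for all $U\in\mathcal U$, then $V\in\mathrm{Op}_X$. A generalized topology in a set $Z$ is a collection $\mathrm{Cov}$ such that $(Z,\bigcup\mathrm{Cov},\mathrm{Cov})$ is a gts. $X_{top}$ is $X$ with the topology generated by $\mathrm{Op}_X$. A compactification $(\alpha X,\alpha)$ of $X_{top}$ is a compact topological space $\alpha X$ (topology $\tau_{\alpha X}$) with a homeomorphic embedding $\alpha$ of $X_{top}$ onto a dense subset. Define $\mathrm{Op}^S_{\alpha X}=\{V\in\tau_{\alpha X}:V\cap X\in\mathrm{Op}_X\}$, $\mathrm{Cov}^S_{\alpha X}=\{\mathcal V\subseteq\mathrm{Op}^S_{\alpha X}:\{V\cap X:V\in\mathcal V\}\in\mathrm{Cov}_X\}$, $\mathrm{Ex}_{\alpha X}(U)=\alpha X\setminus\mathrm{cl}_{\alpha X}(X\setminus U)$ for $U\in\mathrm{Op}_X$, $\mathrm{Op}^w_{\alpha X}=\{\mathrm{Ex}_{\alpha X}(U):U\in\mathrm{Op}_X\}$ and $\mathrm{Cov}^w_{\alpha X}=\{\mathcal V\in\mathrm{Cov}^S_{\alpha X}:\mathcal V\subseteq\mathrm{Op}^w_{\alpha X}\}$. *)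

theory Defs
  imports "HOL-Analysis.Analysis"
begin

text \<open>Generalized topological space (Delfs--Knebusch), axioms A1--A8.\<close>
definition gts :: "'a set \<Rightarrow> 'a set set \<Rightarrow> 'a set set set \<Rightarrow> bool" where
  "gts X Op Cov \<longleftrightarrow>
     Op \<subseteq> Pow X \<and> Cov \<subseteq> Pow Op \<and>
     ({} \<in> Op \<and> X \<in> Op) \<and>
     (\<forall>U\<in>Op. \<forall>V\<in>Op. U \<union> V \<in> Op \<and> U \<inter> V \<in> Op) \<and>
     (\<forall>\<U>. finite \<U> \<and> \<U> \<subseteq> Op \<longrightarrow> \<U> \<in> Cov) \<and>
     (\<forall>\<U>\<in>Cov. \<Union>\<U> \<in> Op) \<and>
     (\<forall>\<U>\<in>Cov. \<forall>V\<in>Op. V \<subseteq> \<Union>\<U> \<longrightarrow> (\<lambda>U. V \<inter> U) ` \<U> \<in> Cov) \<and>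
     (\<forall>\<U>\<in>Cov. \<forall>\<V>. (\<forall>U\<in>\<U>. \<V> U \<in> Cov \<and> \<Union>(\<V> U) = U) \<longrightarrow> (\<Union>U\<in>\<U>. \<V> U) \<in> Cov) \<and>
     (\<forall>\<U>\<in>Cov. \<forall>\<V>. \<V> \<subseteq> Op \<and> \<Union>\<V> = \<Union>\<U> \<and> (\<forall>U\<in>\<U>. \<exists>V\<in>\<V>. U \<subseteq> V) \<longrightarrow> \<V> \<in> Cov) \<and>
     (\<forall>\<U>\<in>Cov. \<forall>V. V \<subseteq> \<Union>\<U> \<and> (\<forall>U\<in>\<U>. V \<inter> U \<in> Op) \<longrightarrow> V \<in> Op)"

definition generalized_topology_in :: "'a set \<Rightarrow> 'a set set set \<Rightarrow> bool" where
  "generalized_topology_in Z Cov \<longleftrightarrow> gts Z (\<Union>Cov) Cov"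

abbreviation Xtop :: "'a set set \<Rightarrow> 'a topology" where
  "Xtop Op \<equiv> topology_generated_by Op"

text \<open>Compactification (alpha X, alpha) of X_top; alpha X is the topology T.\<close>
definition compactification :: "'a set set \<Rightarrow> 'b topology \<Rightarrow> ('a \<Rightarrow> 'b) \<Rightarrow> bool" where
  "compactification Op T \<alpha> \<longleftrightarrow>
     compact_space T \<and> embedding_map (Xtop Op) T \<alpha> \<and>
     T closure_of (\<alpha> ` topspace (Xtop Op)) = topspace T"

text \<open>Under the identification of X with alpha(X), "V \<inter> X" is the preimage
  of V in X, and "X \<setminus> U" is alpha(X \<setminus> U).\<close>
definition trace :: "'a set \<Rightarrow> ('a \<Rightarrow> 'b) \<Rightarrow> 'b set \<Rightarrow> 'a set" where
  "trace X \<alpha> V = {x \<in> X. \<alpha> x \<in> V}"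

definition OpS :: "'a set \<Rightarrow> 'a set set \<Rightarrow> 'b topology \<Rightarrow> ('a \<Rightarrow> 'b) \<Rightarrow> 'b set set" where
  "OpS X Op T \<alpha> = {V. openin T V \<and> trace X \<alpha> V \<in> Op}"

definition CovS :: "'a set \<Rightarrow> 'a set set \<Rightarrow> 'a set set set \<Rightarrow> 'b topology \<Rightarrow> ('a \<Rightarrow> 'b) \<Rightarrow> 'b set set set" where
  "CovS X Op Cov T \<alpha> = {\<V>. \<V> \<subseteq> OpS X Op T \<alpha> \<and> trace X \<alpha> ` \<V> \<in> Cov}"

definition Ex :: "'a set \<Rightarrow> 'b topology \<Rightarrow> ('a \<Rightarrow> 'b) \<Rightarrow> 'a set \<Rightarrow> 'b set" where
  "Ex X T \<alpha> U = topspace T - T closure_of (\<alpha> ` (X - U))"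

definition Opw :: "'a set \<Rightarrow> 'a set set \<Rightarrow> 'b topology \<Rightarrow> ('a \<Rightarrow> 'b) \<Rightarrow> 'b set set" where
  "Opw X Op T \<alpha> = Ex X T \<alpha> ` Op"

definition Covw :: "'a set \<Rightarrow> 'a set set \<Rightarrow> 'a set set set \<Rightarrow> 'b topology \<Rightarrow> ('a \<Rightarrow> 'b) \<Rightarrow> 'b set set set" where
  "Covw X Op Cov T \<alpha> = {\<V> \<in> CovS X Op Cov T \<alpha>. \<V> \<subseteq> Opw X Op T \<alpha>}"

definition admissibly_additive :: "'a set \<Rightarrow> 'a set set set \<Rightarrow> 'b topology \<Rightarrow> ('a \<Rightarrow> 'b) \<Rightarrow> bool" where
  "admissibly_additive X Cov T \<alpha> \<longleftrightarrow>
     (\<forall>\<U>\<in>Cov. Ex X T \<alpha> (\<Union>\<U>) = (\<Union>U\<in>\<U>. Ex X T \<alpha> U))"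

end

theory Submission imports Defs begin

lemma gtsD:
  assumes "gts X Op Cov"
  shows "Op \<subseteq> Pow X" "Cov \<subseteq> Pow Op" "{} \<in> Op" "X \<in> Op"
    "\<And>U V. U \<in> Op \<Longrightarrow> V \<in> Op \<Longrightarrow> U \<union> V \<in> Op"
    "\<And>U V. U \<in> Op \<Longrightarrow> V \<in> Op \<Longrightarrow> U \<inter> V \<in> Op"
    "\<And>\<U>. finite \<U> \<Longrightarrow> \<U> \<subseteq> Op \<Longrightarrow> \<U> \<in> Cov"
    "\<And>\<U>. \<U> \<in> Cov \<Longrightarrow> \<Union>\<U> \<in> Op"
    "\<And>\<U> V. \<U> \<in> Cov \<Longrightarrow> V \<in> Op \<Longrightarrow> V \<subseteq> \<Union>\<U> \<Longrightarrow> (\<lambda>U. V \<inter> U) ` \<U> \<in> Cov"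
    "\<And>\<U> \<V>. \<U> \<in> Cov \<Longrightarrow> (\<And>U. U\<in>\<U> \<Longrightarrow> \<V> U \<in> Cov \<and> \<Union>(\<V> U) = U) \<Longrightarrow> (\<Union>U\<in>\<U>. \<V> U) \<in> Cov"
    "\<And>\<U> \<V>. \<U> \<in> Cov \<Longrightarrow> \<V> \<subseteq> Op \<Longrightarrow> \<Union>\<V> = \<Union>\<U> \<Longrightarrow> (\<And>U. U\<in>\<U> \<Longrightarrow> \<exists>V\<in>\<V>. U \<subseteq> V) \<Longrightarrow> \<V> \<in> Cov"
    "\<And>\<U> V. \<U> \<in> Cov \<Longrightarrow> V \<subseteq> \<Union>\<U> \<Longrightarrow> (\<And>U. U\<in>\<U> \<Longrightarrow> V \<inter> U \<in> Op) \<Longrightarrow> V \<in> Op"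
proof -
  note G = assms[unfolded gts_def]
  note c1 = G[THEN conjunct1]
  note c2 = G[THEN conjunct2, THEN conjunct1]
  note c3 = G[THEN conjunct2, THEN conjunct2, THEN conjunct1]
  note c4 = G[THEN conjunct2, THEN conjunct2, THEN conjunct2, THEN conjunct1]
  note c5 = G[THEN conjunct2, THEN conjunct2, THEN conjunct2, THEN conjunct2, THEN conjunct1]
  note c6 = G[THEN conjunct2, THEN conjunct2, THEN conjunct2, THEN conjunct2, THEN conjunct2, THEN conjunct1]
  note c7 = G[THEN conjunct2, THEN conjunct2, THEN conjunct2, THEN conjunct2, THEN conjunct2, THEN conjunct2, THEN conjunct1]
  note c8 = G[THEN conjunct2, THEN conjunct2, THEN conjunct2, THEN conjunct2, THEN conjunct2, THEN conjunct2, THEN conjunct2, THEN conjunct1]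
  note c9 = G[THEN conjunct2, THEN conjunct2, THEN conjunct2, THEN conjunct2, THEN conjunct2, THEN conjunct2, THEN conjunct2, THEN conjunct2, THEN conjunct1]
  note c10 = G[THEN conjunct2, THEN conjunct2, THEN conjunct2, THEN conjunct2, THEN conjunct2, THEN conjunct2, THEN conjunct2, THEN conjunct2, THEN conjunct2]
  show "Op \<subseteq> Pow X" by (rule c1)
  show "Cov \<subseteq> Pow Op" by (rule c2)
  show "{} \<in> Op" using c3 by (rule conjunct1)
  show "X \<in> Op" using c3 by (rule conjunct2)
  show "\<And>U V. U \<in> Op \<Longrightarrow> V \<in> Op \<Longrightarrow> U \<union> V \<in> Op" using c4 by simp
  show "\<And>U V. U \<in> Op \<Longrightarrow> V \<in> Op \<Longrightarrow> U \<inter> V \<in> Op" using c4 by simp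
  show "\<And>\<U>. finite \<U> \<Longrightarrow> \<U> \<subseteq> Op \<Longrightarrow> \<U> \<in> Cov" using c5 by simp
  show "\<And>\<U>. \<U> \<in> Cov \<Longrightarrow> \<Union>\<U> \<in> Op" using c6 by simp
  show "\<And>\<U> V. \<U> \<in> Cov \<Longrightarrow> V \<in> Op \<Longrightarrow> V \<subseteq> \<Union>\<U> \<Longrightarrow> (\<lambda>U. V \<inter> U) ` \<U> \<in> Cov"
    using c7 by simp
  show "\<And>\<U> \<V>. \<U> \<in> Cov \<Longrightarrow> (\<And>U. U\<in>\<U> \<Longrightarrow> \<V> U \<in> Cov \<and> \<Union>(\<V> U) = U) \<Longrightarrow> (\<Union>U\<in>\<U>. \<V> U) \<in> Cov"
  proof -
    fix \<U> \<V> assume a: "\<U> \<in> Cov" and b: "\<And>U. U\<in>\<U> \<Longrightarrow> \<V> U \<in> Cov \<and> \<Union>(\<V> U) = U"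
    from b have b': "\<forall>U\<in>\<U>. \<V> U \<in> Cov \<and> \<Union>(\<V> U) = U" by (rule ballI)
    show "(\<Union>U\<in>\<U>. \<V> U) \<in> Cov" by (rule c8[THEN bspec, OF a, THEN spec, THEN mp, OF b'])
  qed
  show "\<And>\<U> \<V>. \<U> \<in> Cov \<Longrightarrow> \<V> \<subseteq> Op \<Longrightarrow> \<Union>\<V> = \<Union>\<U> \<Longrightarrow> (\<And>U. U\<in>\<U> \<Longrightarrow> \<exists>V\<in>\<V>. U \<subseteq> V) \<Longrightarrow> \<V> \<in> Cov"
  proof -
    fix \<U> \<V> assume a: "\<U> \<in> Cov" and b1: "\<V> \<subseteq> Op" and b2: "\<Union>\<V> = \<Union>\<U>" and b3: "\<And>U. U\<in>\<U> \<Longrightarrow> \<exists>V\<in>\<V>. U \<subseteq> V"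
    from b3 have b3': "\<forall>U\<in>\<U>. \<exists>V\<in>\<V>. U \<subseteq> V" by (rule ballI)
    show "\<V> \<in> Cov" by (rule c9[THEN bspec, OF a, THEN spec, THEN mp, OF conjI[OF b1 conjI[OF b2 b3']]])
  qed
  show "\<And>\<U> V. \<U> \<in> Cov \<Longrightarrow> V \<subseteq> \<Union>\<U> \<Longrightarrow> (\<And>U. U\<in>\<U> \<Longrightarrow> V \<inter> U \<in> Op) \<Longrightarrow> V \<in> Op"
  proof -
    fix \<U> V assume a: "\<U> \<in> Cov" and b1: "V \<subseteq> \<Union>\<U>" and b2: "\<And>U. U\<in>\<U> \<Longrightarrow> V \<inter> U \<in> Op"
    from b2 have b2': "\<forall>U\<in>\<U>. V \<inter> U \<in> Op" by (rule ballI)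
    show "V \<in> Op" by (rule c10[THEN bspec, OF a, THEN spec, THEN mp, OF conjI[OF b1 b2']])
  qed
qed

lemma gts_Op_X: "gts X Op Cov \<Longrightarrow> \<Union>Op = X"
proof -
  assume g: "gts X Op Cov"
  show "\<Union>Op = X" using gtsD(1)[OF g] gtsD(4)[OF g] by blast
qed

lemma emb_facts:
  assumes g: "gts X Op Cov" and c: "compactification Op T \<alpha>"
  shows "inj_on \<alpha> X" "\<alpha> ` X \<subseteq> topspace T" "T closure_of (\<alpha> ` X) = topspace T"
    "\<And>U. U \<in> Op \<Longrightarrow> \<alpha> ` X \<inter> T closure_of (\<alpha> ` (X - U)) = \<alpha> ` (X - U)"
proof -
  have tX: "topspace (Xtop Op) = X" using gts_Op_X[OF g] by simp
  have h: "homeomorphic_map (Xtop Op) (subtopology T (\<alpha> ` X)) \<alpha>"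
    using c tX unfolding compactification_def embedding_map_def by simp
  have "inj_on \<alpha> (topspace (Xtop Op))" using homeomorphic_imp_injective_map[OF h] .
  then show "inj_on \<alpha> X" using tX by simp
  have "\<alpha> ` (topspace (Xtop Op)) = topspace (subtopology T (\<alpha> ` X))"
    using homeomorphic_imp_surjective_map[OF h] .
  then show "\<alpha> ` X \<subseteq> topspace T" using tX by auto
  show "T closure_of (\<alpha> ` X) = topspace T" using c tX unfolding compactification_def by simp
  fix U assume U: "U \<in> Op"
  have UX: "U \<subseteq> X" using U gtsD(1)[OF g] by blast
  have "openin (Xtop Op) U" using U by (rule topology_generated_by_Basis)
  then have "closedin (Xtop Op) (topspace (Xtop Op) - U)"
    by (intro closedin_diff closedin_topspace)
  then have "closedin (Xtop Op) (X - U)" using tX by simp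
  then have cl: "Xtop Op closure_of (X - U) = X - U" by (simp add: closure_of_eq)
  have "subtopology T (\<alpha> ` X) closure_of (\<alpha> ` (X - U)) = \<alpha> ` (Xtop Op closure_of (X - U))"
    by (rule homeomorphic_map_closure_of[OF h]) (use tX in auto)
  then have "\<alpha> ` X \<inter> T closure_of (\<alpha> ` X \<inter> \<alpha> ` (X - U)) = \<alpha> ` (X - U)"
    unfolding closure_of_subtopology cl by simp
  moreover have "\<alpha> ` X \<inter> \<alpha> ` (X - U) = \<alpha> ` (X - U)" by blast
  ultimately show "\<alpha> ` X \<inter> T closure_of (\<alpha> ` (X - U)) = \<alpha> ` (X - U)" by simp
qed

lemma trace_Ex:
  assumes g: "gts X Op Cov" and c: "compactification Op T \<alpha>" and U: "U \<in> Op"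
  shows "trace X \<alpha> (Ex X T \<alpha> U) = U"
proof -
  note e = emb_facts[OF g c]
  have UX: "U \<subseteq> X" using U gtsD(1)[OF g] by blast
  have "\<And>x. x \<in> X \<Longrightarrow> \<alpha> x \<in> T closure_of (\<alpha> ` (X - U)) \<longleftrightarrow> x \<notin> U"
  proof -
    fix x assume x: "x \<in> X"
    have "\<alpha> x \<in> T closure_of (\<alpha> ` (X - U)) \<longleftrightarrow> \<alpha> x \<in> \<alpha> ` (X - U)"
      using e(4)[OF U] x by blast
    also have "\<dots> \<longleftrightarrow> x \<in> X - U" using e(1) x by (meson Diff_subset inj_on_image_mem_iff)
    finally show "\<alpha> x \<in> T closure_of (\<alpha> ` (X - U)) \<longleftrightarrow> x \<notin> U" using x by blast
  qed
  then show ?thesis using e(2) UX unfolding trace_def Ex_def by auto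
qed

lemma Ex_open: "openin T (Ex X T \<alpha> U)"
  unfolding Ex_def by (simp add: openin_diff closedin_closure_of)

lemma Ex_Int: "Ex X T \<alpha> (U \<inter> V) = Ex X T \<alpha> U \<inter> Ex X T \<alpha> V"
proof -
  have "X - (U \<inter> V) = (X - U) \<union> (X - V)" by blast
  then have "\<alpha> ` (X - (U \<inter> V)) = \<alpha> ` (X - U) \<union> \<alpha> ` (X - V)" by auto
  then show ?thesis unfolding Ex_def by (simp only: closure_of_Un Diff_Un)
qed

lemma Ex_mono: "U \<subseteq> V \<Longrightarrow> Ex X T \<alpha> U \<subseteq> Ex X T \<alpha> V"
proof -
  assume "U \<subseteq> V"
  then have "\<alpha> ` (X - V) \<subseteq> \<alpha> ` (X - U)" by blast
  then have "T closure_of (\<alpha> ` (X - V)) \<subseteq> T closure_of (\<alpha> ` (X - U))" by (rule closure_of_mono)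
  then show ?thesis unfolding Ex_def by blast
qed

lemma trace_Union: "trace X \<alpha> (\<Union>\<V>) = \<Union>(trace X \<alpha> ` \<V>)"
  unfolding trace_def by auto
lemma trace_Int: "trace X \<alpha> (A \<inter> B) = trace X \<alpha> A \<inter> trace X \<alpha> B"
  unfolding trace_def by auto
lemma trace_mono: "A \<subseteq> B \<Longrightarrow> trace X \<alpha> A \<subseteq> trace X \<alpha> B"
  unfolding trace_def by auto

lemma Opw_D:
  assumes g: "gts X Op Cov" and c: "compactification Op T \<alpha>" and V: "V \<in> Opw X Op T \<alpha>"
  shows "trace X \<alpha> V \<in> Op" "Ex X T \<alpha> (trace X \<alpha> V) = V" "openin T V"
proof -
  obtain U where U: "U \<in> Op" "V = Ex X T \<alpha> U" using V unfolding Opw_def by blast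
  show "trace X \<alpha> V \<in> Op" using U trace_Ex[OF g c] by simp
  show "Ex X T \<alpha> (trace X \<alpha> V) = V" using U trace_Ex[OF g c] by simp
  show "openin T V" using U Ex_open by simp
qed

lemma Opw_I:
  assumes "U \<in> Op" shows "Ex X T \<alpha> U \<in> Opw X Op T \<alpha>"
  using assms unfolding Opw_def by (rule imageI)

lemma Covw_iff:
  assumes g: "gts X Op Cov" and c: "compactification Op T \<alpha>"
  shows "\<V> \<in> Covw X Op Cov T \<alpha> \<longleftrightarrow> \<V> \<subseteq> Opw X Op T \<alpha> \<and> trace X \<alpha> ` \<V> \<in> Cov"
proof -
  have "Opw X Op T \<alpha> \<subseteq> OpS X Op T \<alpha>"
  proof
    fix V assume "V \<in> Opw X Op T \<alpha>"
    then show "V \<in> OpS X Op T \<alpha>" using Opw_D[OF g c] unfolding OpS_def by simp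
  qed
  moreover have "\<V> \<in> Covw X Op Cov T \<alpha> \<longleftrightarrow> (\<V> \<subseteq> OpS X Op T \<alpha> \<and> trace X \<alpha> ` \<V> \<in> Cov) \<and> \<V> \<subseteq> Opw X Op T \<alpha>"
    unfolding Covw_def CovS_def by simp
  ultimately show ?thesis by auto
qed

lemma Ex_image_trace:
  assumes g: "gts X Op Cov" and c: "compactification Op T \<alpha>" and V: "\<V> \<subseteq> Opw X Op T \<alpha>"
  shows "Ex X T \<alpha> ` trace X \<alpha> ` \<V> = \<V>"
proof -
  have "Ex X T \<alpha> ` trace X \<alpha> ` \<V> = (\<lambda>V. Ex X T \<alpha> (trace X \<alpha> V)) ` \<V>" by (simp add: image_image)
  also have "\<dots> = (\<lambda>V. V) ` \<V>" using Opw_D(2)[OF g c] V by (intro image_cong) auto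
  finally show ?thesis by simp
qed

lemma Union_Covw:
  assumes g: "gts X Op Cov" and c: "compactification Op T \<alpha>"
  shows "\<Union>(Covw X Op Cov T \<alpha>) = Opw X Op T \<alpha>"
proof
  show "\<Union>(Covw X Op Cov T \<alpha>) \<subseteq> Opw X Op T \<alpha>" unfolding Covw_def by blast
  show "Opw X Op T \<alpha> \<subseteq> \<Union>(Covw X Op Cov T \<alpha>)"
  proof
    fix V assume V: "V \<in> Opw X Op T \<alpha>"
    have "trace X \<alpha> ` {V} \<in> Cov" using gtsD(7)[OF g] Opw_D(1)[OF g c V] by simp
    then have "{V} \<in> Covw X Op Cov T \<alpha>" using V Covw_iff[OF g c] by simp
    then show "V \<in> \<Union>(Covw X Op Cov T \<alpha>)" by blast
  qed
qed

theorem proposition5p12: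
  fixes X :: "'a set" and Op :: "'a set set" and Cov :: "'a set set set"
    and T :: "'b topology" and \<alpha> :: "'a \<Rightarrow> 'b"
  assumes "gts X Op Cov"
    and "compactification Op T \<alpha>"
  shows "generalized_topology_in (topspace T) (Covw X Op Cov T \<alpha>)
           \<longleftrightarrow> admissibly_additive X Cov T \<alpha>"
proof -
  note g = assms(1) and c = assms(2)
  let ?E = "Ex X T \<alpha>" and ?t = "trace X \<alpha>" and ?W = "Opw X Op T \<alpha>"
    and ?C = "Covw X Op Cov T \<alpha>"
  have CD1: "\<And>\<V>. \<V> \<in> ?C \<Longrightarrow> \<V> \<subseteq> ?W" using Covw_iff[OF g c] by simp
  have CD2: "\<And>\<V>. \<V> \<in> ?C \<Longrightarrow> ?t ` \<V> \<in> Cov" using Covw_iff[OF g c] by simp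
  have CIn: "\<And>\<V>. \<V> \<subseteq> ?W \<Longrightarrow> ?t ` \<V> \<in> Cov \<Longrightarrow> \<V> \<in> ?C" using Covw_iff[OF g c] by simp
  note OD = Opw_D[OF g c] and UC = Union_Covw[OF g c]
  have gOp: "Op \<subseteq> Pow X" "Cov \<subseteq> Pow Op" and A4: "\<And>\<U>. \<U> \<in> Cov \<Longrightarrow> \<Union>\<U> \<in> Op"
    using gtsD(1,2,8)[OF g] by blast+
  show ?thesis
  proof
    assume gt: "generalized_topology_in (topspace T) ?C"
    then have A4w: "\<And>\<V>. \<V> \<in> ?C \<Longrightarrow> \<Union>\<V> \<in> ?W"
      using gtsD(8)[OF gt[unfolded generalized_topology_in_def UC]] by blast
    show "admissibly_additive X Cov T \<alpha>" unfolding admissibly_additive_def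
    proof
      fix \<U> assume U: "\<U> \<in> Cov"
      have UOp: "\<U> \<subseteq> Op" using U gOp by blast
      have sub: "?E ` \<U> \<subseteq> ?W" using UOp Opw_I by blast
      have tr: "?t ` ?E ` \<U> = \<U>"
      proof -
        have "?t ` ?E ` \<U> = (\<lambda>U. ?t (?E U)) ` \<U>" by (simp add: image_image)
        also have "\<dots> = (\<lambda>U. U) ` \<U>" using trace_Ex[OF g c] UOp by (intro image_cong) auto
        finally show ?thesis by simp
      qed
      have "?E ` \<U> \<in> ?C" using CIn[OF sub] tr U by simp
      then have W: "\<Union>(?E ` \<U>) \<in> ?W" by (rule A4w)
      have "?t (\<Union>(?E ` \<U>)) = \<Union>\<U>" using tr trace_Union by metis
      then show "?E (\<Union>\<U>) = \<Union>(?E ` \<U>)" using OD(2)[OF W] by simp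
    qed
  next
    assume aa: "admissibly_additive X Cov T \<alpha>"
    then have add: "\<And>\<U>. \<U> \<in> Cov \<Longrightarrow> ?E (\<Union>\<U>) = \<Union>(?E ` \<U>)"
      unfolding admissibly_additive_def by blast
    have UnC: "\<Union>\<V> = ?E (\<Union>(?t ` \<V>))" if "\<V> \<in> ?C" for \<V>
    proof -
      have V: "\<V> \<subseteq> ?W" "?t ` \<V> \<in> Cov" using CD1[OF that] CD2[OF that] by auto
      have "?E (\<Union>(?t ` \<V>)) = \<Union>(?E ` ?t ` \<V>)" using add V(2) by blast
      also have "\<dots> = \<Union>\<V>" using Ex_image_trace[OF g c V(1)] by simp
      finally show ?thesis by simp
    qed
    have WInt: "A \<inter> B \<in> ?W" if "A \<in> ?W" "B \<in> ?W" for A B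
    proof -
      have "A \<inter> B = ?E (?t A \<inter> ?t B)" using Ex_Int OD(2) that by metis
      moreover have "?t A \<inter> ?t B \<in> Op" using OD(1) that gtsD(6)[OF g] by blast
      ultimately show ?thesis using Opw_I by metis
    qed
    have WUn: "A \<union> B \<in> ?W" if "A \<in> ?W" "B \<in> ?W" for A B
    proof -
      have fin: "{?t A, ?t B} \<in> Cov" using OD(1) that gtsD(7)[OF g] by simp
      have "?E (\<Union>{?t A, ?t B}) = \<Union>(?E ` {?t A, ?t B})" using add fin by blast
      then have "A \<union> B = ?E (?t A \<union> ?t B)" using OD(2) that by simp
      moreover have "?t A \<union> ?t B \<in> Op" using OD(1) that gtsD(5)[OF g] by blast
      ultimately show ?thesis using Opw_I by metis
    qed
    show "generalized_topology_in (topspace T) ?C"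
      unfolding generalized_topology_in_def UC gts_def
    proof (intro conjI)
      show "?W \<subseteq> Pow (topspace T)" using OD(3) openin_subset by blast
      show "?C \<subseteq> Pow ?W" using CD1 by blast
      have "?E {} = {}" using emb_facts(3)[OF g c] unfolding Ex_def by simp
      moreover have "{} \<in> Op" using gtsD(3)[OF g] .
      ultimately show "{} \<in> ?W" using Opw_I by metis
      have "?E X = topspace T" unfolding Ex_def by simp
      moreover have "X \<in> Op" using gtsD(4)[OF g] .
      ultimately show "topspace T \<in> ?W" using Opw_I by metis
      show "\<forall>U\<in>?W. \<forall>V\<in>?W. U \<union> V \<in> ?W \<and> U \<inter> V \<in> ?W" using WUn WInt by blast
      show "\<forall>\<U>. finite \<U> \<and> \<U> \<subseteq> ?W \<longrightarrow> \<U> \<in> ?C"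
      proof (intro allI impI)
        fix \<U> assume H: "finite \<U> \<and> \<U> \<subseteq> ?W"
        have "?t ` \<U> \<subseteq> Op" using H OD(1) by blast
        moreover have "finite (?t ` \<U>)" using H by simp
        ultimately have "?t ` \<U> \<in> Cov" using gtsD(7)[OF g] by simp
        then show "\<U> \<in> ?C" using CIn H by simp
      qed
      show "\<forall>\<U>\<in>?C. \<Union>\<U> \<in> ?W"
      proof
        fix \<U> assume U: "\<U> \<in> ?C"
        then have "?t ` \<U> \<in> Cov" using CD2 by blast
        then have "\<Union>(?t ` \<U>) \<in> Op" by (rule A4)
        then show "\<Union>\<U> \<in> ?W" using UnC[OF U] Opw_I[of "\<Union>(?t ` \<U>)"] by simp
      qed
      show "\<forall>\<U>\<in>?C. \<forall>V\<in>?W. V \<subseteq> \<Union>\<U> \<longrightarrow> (\<lambda>U. V \<inter> U) ` \<U> \<in> ?C"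
      proof (intro ballI impI)
        fix \<U> V assume U: "\<U> \<in> ?C" and V: "V \<in> ?W" and VU: "V \<subseteq> \<Union>\<U>"
        have U1: "\<U> \<subseteq> ?W" "?t ` \<U> \<in> Cov" using CD1[OF U] CD2[OF U] by auto
        have "?t V \<subseteq> \<Union>(?t ` \<U>)" using trace_mono[OF VU] by (simp only: trace_Union)
        then have "(\<lambda>U. ?t V \<inter> U) ` (?t ` \<U>) \<in> Cov"
          using gtsD(9)[OF g U1(2) OD(1)[OF V]] by blast
        moreover have "(\<lambda>U. ?t V \<inter> U) ` (?t ` \<U>) = ?t ` (\<lambda>U. V \<inter> U) ` \<U>"
          by (auto simp: image_image trace_Int)
        moreover have "(\<lambda>U. V \<inter> U) ` \<U> \<subseteq> ?W" using WInt V U1(1) by blast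
        ultimately show "(\<lambda>U. V \<inter> U) ` \<U> \<in> ?C" using CIn by simp
      qed
      show "\<forall>\<U>\<in>?C. \<forall>\<V>. (\<forall>U\<in>\<U>. \<V> U \<in> ?C \<and> \<Union>(\<V> U) = U) \<longrightarrow> (\<Union>U\<in>\<U>. \<V> U) \<in> ?C"
      proof (intro ballI allI impI)
        fix \<U> and \<V> :: "'b set \<Rightarrow> 'b set set"
        assume U: "\<U> \<in> ?C" and H: "\<forall>U\<in>\<U>. \<V> U \<in> ?C \<and> \<Union>(\<V> U) = U"
        have U1: "\<U> \<subseteq> ?W" "?t ` \<U> \<in> Cov" using CD1[OF U] CD2[OF U] by auto
        define \<V>' where "\<V>' = (\<lambda>U'. ?t ` \<V> (?E U'))"
        have EtU: "?E (?t U) = U" if "U \<in> \<U>" for U using OD(2) U1(1) that by blast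
        have "\<forall>U'\<in>?t ` \<U>. \<V>' U' \<in> Cov \<and> \<Union>(\<V>' U') = U'"
        proof
          fix U' assume "U' \<in> ?t ` \<U>"
          then obtain U where U: "U \<in> \<U>" "U' = ?t U" by blast
          have "\<V>' U' = ?t ` \<V> U" unfolding \<V>'_def using U EtU by simp
          moreover have "?t ` \<V> U \<in> Cov" using H U CD2 by blast
          moreover have "\<Union>(?t ` \<V> U) = U'"
          proof -
            have "\<Union>(?t ` \<V> U) = ?t (\<Union>(\<V> U))" by (rule trace_Union[symmetric])
            also have "\<dots> = U'" using H U by simp
            finally show ?thesis .
          qed
          ultimately show "\<V>' U' \<in> Cov \<and> \<Union>(\<V>' U') = U'" by simp
        qed
        then have "(\<Union>U'\<in>?t ` \<U>. \<V>' U') \<in> Cov" using gtsD(10)[OF g U1(2)] by blast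
        moreover have "(\<Union>U'\<in>?t ` \<U>. \<V>' U') = ?t ` (\<Union>U\<in>\<U>. \<V> U)"
          unfolding \<V>'_def using EtU by auto
        moreover have "(\<Union>U\<in>\<U>. \<V> U) \<subseteq> ?W" using H CD1 by blast
        ultimately show "(\<Union>U\<in>\<U>. \<V> U) \<in> ?C" using CIn by simp
      qed
      show "\<forall>\<U>\<in>?C. \<forall>\<V>. \<V> \<subseteq> ?W \<and> \<Union>\<V> = \<Union>\<U> \<and> (\<forall>U\<in>\<U>. \<exists>V\<in>\<V>. U \<subseteq> V) \<longrightarrow> \<V> \<in> ?C"
      proof (intro ballI allI impI)
        fix \<U> \<V> assume U: "\<U> \<in> ?C" and H: "\<V> \<subseteq> ?W \<and> \<Union>\<V> = \<Union>\<U> \<and> (\<forall>U\<in>\<U>. \<exists>V\<in>\<V>. U \<subseteq> V)"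
        have U1: "\<U> \<subseteq> ?W" "?t ` \<U> \<in> Cov" using CD1[OF U] CD2[OF U] by auto
        have H1: "\<V> \<subseteq> ?W" using H by (rule conjunct1)
        have H2: "\<Union>\<V> = \<Union>\<U>" using H[THEN conjunct2] by (rule conjunct1)
        have H3: "\<forall>U\<in>\<U>. \<exists>V\<in>\<V>. U \<subseteq> V" using H[THEN conjunct2] by (rule conjunct2)
        have a: "?t ` \<V> \<subseteq> Op" using H1 OD(1) by blast
        have b: "\<Union>(?t ` \<V>) = \<Union>(?t ` \<U>)"
        proof -
          have "\<Union>(?t ` \<V>) = ?t (\<Union>\<V>)" by (rule trace_Union[symmetric])
          also have "\<dots> = ?t (\<Union>\<U>)" using H2 by simp
          also have "\<dots> = \<Union>(?t ` \<U>)" by (rule trace_Union)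
          finally show ?thesis .
        qed
        have d: "\<forall>U\<in>?t ` \<U>. \<exists>V\<in>?t ` \<V>. U \<subseteq> V"
        proof
          fix U' assume "U' \<in> ?t ` \<U>"
          then obtain U where U: "U \<in> \<U>" "U' = ?t U" by blast
          then obtain V where V: "V \<in> \<V>" "U \<subseteq> V" using H3 by blast
          have "?t U \<subseteq> ?t V" using V(2) by (rule trace_mono)
          then show "\<exists>V\<in>?t ` \<V>. U' \<subseteq> V" using U V(1) by blast
        qed
        have "?t ` \<V> \<in> Cov" using gtsD(11)[OF g U1(2) a b] d by blast
        then show "\<V> \<in> ?C" using CIn[OF H1] by simp
      qed
      show "\<forall>\<U>\<in>?C. \<forall>V. V \<subseteq> \<Union>\<U> \<and> (\<forall>U\<in>\<U>. V \<inter> U \<in> ?W) \<longrightarrow> V \<in> ?W"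
      proof (intro ballI allI impI)
        fix \<U> V assume U: "\<U> \<in> ?C" and H: "V \<subseteq> \<Union>\<U> \<and> (\<forall>U\<in>\<U>. V \<inter> U \<in> ?W)"
        have U1: "\<U> \<subseteq> ?W" "?t ` \<U> \<in> Cov" using CD1[OF U] CD2[OF U] by auto
        have "?t V \<subseteq> ?t (\<Union>\<U>)" using H by (intro trace_mono) simp
        then have sub: "?t V \<subseteq> \<Union>(?t ` \<U>)" by (simp only: trace_Union)
        have tI: "?t V \<inter> ?t U \<in> Op" if "U \<in> \<U>" for U
        proof -
          have "V \<inter> U \<in> ?W" using H that by blast
          then have "?t (V \<inter> U) \<in> Op" by (rule OD(1))
          then show ?thesis by (simp only: trace_Int)
        qed
        then have VOp: "?t V \<in> Op" using gtsD(12)[OF g U1(2) sub] by blast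
        have fam: "(\<lambda>U'. ?t V \<inter> U') ` (?t ` \<U>) \<in> Cov"
          using gtsD(9)[OF g U1(2) VOp sub] .
        have "?E (\<Union>((\<lambda>U'. ?t V \<inter> U') ` (?t ` \<U>))) = \<Union>(?E ` (\<lambda>U'. ?t V \<inter> U') ` (?t ` \<U>))"
          using add fam by blast
        moreover have "\<Union>((\<lambda>U'. ?t V \<inter> U') ` (?t ` \<U>)) = ?t V" using sub by blast
        moreover have "?E ` (\<lambda>U'. ?t V \<inter> U') ` (?t ` \<U>) = (\<lambda>U. V \<inter> U) ` \<U>"
        proof -
          have "?E ` (\<lambda>U'. ?t V \<inter> U') ` (?t ` \<U>) = (\<lambda>U. ?E (?t (V \<inter> U))) ` \<U>"
            by (simp add: image_image trace_Int)
          also have "\<dots> = (\<lambda>U. V \<inter> U) ` \<U>" using H OD(2) by (intro image_cong) auto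
          finally show ?thesis .
        qed
        moreover have "\<Union>((\<lambda>U. V \<inter> U) ` \<U>) = V" using H by blast
        ultimately have "?E (?t V) = V" by simp
        then show "V \<in> ?W" using Opw_I[OF VOp, where X=X and T=T and \<alpha>=\<alpha>] by simp
      qed
    qed
  qed
qed

end
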